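(* Let $p\geq 3$ and let $\Gamma$ be a $p$-hamiltonian graph in normalized form with vertices $v_1,\dots,v_\gamma$. Suppose $\Gamma$ has chords $d_{1,j}$ and $d_{k,l}$ with $1<j<k<l\leq\gamma$, $j\leq\gamma/2$, $j-1\leq\gamma/2-1$, $l-k<\lfloor\gamma/2\rfloor$, $j-1\leq l-k$ and $k-j\leq\gamma+1-l$. Then $k\leq\lfloor\gamma/2\rfloor+1$, and if $\Gamma'$ is the graph obtained by twisting $(d_{1,j},d_{k,l})$ into $(d_{1,k},d_{j,l})$ (i.e. replacing the chord $v_1v_j$ by a chord $v_1v_k$ and the chord $v_kv_l$ by a chord $v_jv_l$), then $\epsilon(\Gamma')<\epsilon(\Gamma)$, where for a normalized $p$-regular hamiltonian graph $\epsilon(\Gamma)=\sum_{d}\big(\lfloor\gamma/2\rfloor-\alpha(d)\big)$, the sum over all chords $d$.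
   Context: A $p$-hamiltonian graph is a finite connected loopless graph (multiple edges allowed), $p$-regular, with at least 2 vertices, containing a hamiltonian cycle $\Delta$. Normalized form: fix $\Delta$, $\gamma=|V(\Gamma)|$, and label vertices $v_1,\dots,v_\gamma$ so that $\Delta$ consists of edges joining $v_i,v_{i+1}$ (indices mod $\gamma$). Chords are the edges not in $\Delta$; $d_{a,b}$ ($a<b$) denotes a chord joining $v_a$ and $v_b$. Its amplitude is $\alpha(d_{a,b})=\min\{b-a,\gamma-b+a\}$. The graph $\Gamma'$ inherits the labeling and hamiltonian cycle of $\Gamma$. *)

theory Defs
  imports Complex_Main "HOL-Library.Multiset"
begin

text \<open>A normalized hamiltonian multigraph: vertices are 1..gamma, the hamiltonian
cycle Delta consists of the edges v_i v_(i+1) (indices mod gamma), and the chords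
(all other edges) form a multiset of pairs (a,b) with 1 <= a < b <= gamma
(loopless; parallel edges allowed).  Each vertex has degree 2 in Delta.\<close>

definition chord_deg :: "(nat \<times> nat) multiset \<Rightarrow> nat \<Rightarrow> nat" where
  "chord_deg C v = size (filter_mset (\<lambda>(a,b). a = v) C) + size (filter_mset (\<lambda>(a,b). b = v) C)"

definition normalized_p_hamiltonian :: "nat \<Rightarrow> nat \<Rightarrow> (nat \<times> nat) multiset \<Rightarrow> bool" where
  "normalized_p_hamiltonian p gamma C \<longleftrightarrow>
     gamma \<ge> 2 \<and>
     (\<forall>d \<in># C. 1 \<le> fst d \<and> fst d < snd d \<and> snd d \<le> gamma) \<and>
     (\<forall>v \<in> {1..gamma}. 2 + chord_deg C v = p)"

definition amplitude :: "nat \<Rightarrow> nat \<times> nat \<Rightarrow> nat" where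
  "amplitude gamma d = min (snd d - fst d) (gamma - snd d + fst d)"

definition epsilon :: "nat \<Rightarrow> (nat \<times> nat) multiset \<Rightarrow> nat" where
  "epsilon gamma C = (\<Sum>d \<in># C. gamma div 2 - amplitude gamma d)"

definition twist :: "(nat \<times> nat) multiset \<Rightarrow> nat \<times> nat \<Rightarrow> nat \<times> nat \<Rightarrow> nat \<times> nat \<Rightarrow> nat \<times> nat
                     \<Rightarrow> (nat \<times> nat) multiset" where
  "twist C d1 d2 e1 e2 = C - {#d1, d2#} + {#e1, e2#}"


end

theory Submission
  imports Defs
begin

lemma aux_ineq: "(a1::nat) \<le> h \<Longrightarrow> a2 \<le> h \<Longrightarrow> a3 \<le> h \<Longrightarrow> a4 \<le> h
  \<Longrightarrow> a1 + a2 < a3 + a4 \<Longrightarrow> (h - a3) + (h - a4) < (h - a1) + (h - a2)" by linarith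

theorem mainTheorem9:
  fixes p gamma j k l :: nat and C :: "(nat \<times> nat) multiset"
  assumes "p \<ge> 3"
    and "normalized_p_hamiltonian p gamma C"
    and "(1, j) \<in># C" and "(k, l) \<in># C"
    and "1 < j" and "j < k" and "k < l" and "l \<le> gamma"
    and "real j \<le> real gamma / 2"
    and "real j - 1 \<le> real gamma / 2 - 1"
    and "l - k < gamma div 2"
    and "j - 1 \<le> l - k"
    and "k - j \<le> gamma + 1 - l"
  shows "k \<le> gamma div 2 + 1 \<and>
         epsilon gamma (twist C (1, j) (k, l) (1, k) (j, l)) < epsilon gamma C"
proof -
  define h where "h = gamma div 2"
  have j2: "2 * j \<le> gamma" using assms(9) by linarith
  have hh: "2 * h \<le> gamma" "gamma \<le> 2 * h + 1" unfolding h_def by auto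
  have lk: "l - k < h" using assms(11) unfolding h_def .
  have kh: "k \<le> h + 1" using hh lk assms(5-8,12,13) by linarith
  define f where "f = (\<lambda>d. h - amplitude gamma d)"
  have a1: "amplitude gamma (1,j) = j - 1" using j2 assms(5) unfolding amplitude_def by simp
  have a2: "amplitude gamma (k,l) = l - k"
  proof -
    have "l - k \<le> gamma - l + k" using hh lk assms(7,8) by linarith
    then show ?thesis unfolding amplitude_def by simp
  qed
  have a3: "amplitude gamma (1,k) = k - 1"
  proof -
    have "k - 1 \<le> gamma - k + 1" using hh kh assms(5-8) by linarith
    then show ?thesis unfolding amplitude_def by simp
  qed
  have a4: "amplitude gamma (j,l) = min (l - j) (gamma - l + j)" unfolding amplitude_def by simp
  have b4: "min (l - j) (gamma - l + j) \<le> h"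
  proof (cases "l - j \<le> gamma - l + j")
    case True
    then have "2 * (l - j) \<le> gamma" using assms(6-8) by linarith
    then show ?thesis using True hh by (simp add: min_def)
  next
    case False
    then have "2 * (gamma - l + j) \<le> gamma" using assms(6-8) by presburger
    then show ?thesis using False hh by (simp add: min_def)
  qed
  have c4: "min (l - j) (gamma - l + j) + k - 1 > j - 1 + (l - k)"
  proof (cases "l - j \<le> gamma - l + j")
    case True then show ?thesis using assms(5-8) by (simp add: min_def)
  next
    case False then show ?thesis using hh lk assms(5-8) by (simp add: min_def)
  qed
  have ineq: "f (1,k) + f (j,l) < f (1,j) + f (k,l)"
    unfolding f_def a1 a2 a3 a4
  proof (rule aux_ineq)
    show "j - 1 \<le> h" using kh assms(6) by linarith
    show "l - k \<le> h" using lk by linarith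
    show "k - 1 \<le> h" using kh by linarith
    show "min (l - j) (gamma - l + j) \<le> h" by (fact b4)
    show "j - 1 + (l - k) < k - 1 + min (l - j) (gamma - l + j)" using c4 assms(5,6) by linarith
  qed
  have sub: "{#(1,j),(k,l)#} \<subseteq># C" using assms(3,4,5,6)
    by (simp add: insert_subset_eq_iff in_diff_count)
  define C' where "C' = C - {#(1,j),(k,l)#}"
  have CC: "C = C' + {#(1,j),(k,l)#}" using sub unfolding C'_def by (metis subset_mset.diff_add)
  have eC: "epsilon gamma C = sum_mset (image_mset f C') + f (1,j) + f (k,l)"
    unfolding epsilon_def f_def h_def by (subst CC) simp
  have eT: "epsilon gamma (twist C (1, j) (k, l) (1, k) (j, l)) = sum_mset (image_mset f C') + f (1,k) + f (j,l)"
    unfolding epsilon_def f_def h_def twist_def C'_def by simp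
  show ?thesis using kh ineq eC eT unfolding h_def by simp
qed

end
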